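(* Let $t\geq 4$ be an integer and let $H$ be a $3$-graph on $t$ vertices with at least $\binom{t-1}{3}+\binom{t-2}{2}+2$ edges. Then $H$ is not $\lambda$-perfect.
   Context: For a $3$-graph $G$ on vertex set $[n]$ and $\vec x\in\Delta=\{\vec x\in[0,1]^n:\sum_i x_i=1\}$, put $\lambda(G,\vec x)=\sum_{e\in E(G)}\prod_{i\in e}x_i$ and $\lambda(G)=\max_{\vec x\in\Delta}\lambda(G,\vec x)$ (the Lagrangian). $G$ is $F$-free if it contains no subgraph isomorphic to $F$. The Lagrangian density is $\pi_\lambda(F)=\sup\{3!\,\lambda(G): G\text{ is an }F\text{-free }3\text{-graph}\}$. $K_m^3$ is the complete $3$-graph on $m$ vertices. A $3$-graph $H$ on $t$ vertices is $\lambda$-perfect if $\pi_\lambda(H)=3!\,\lambda(K_{t-1}^3)$. *)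

theory Defs
  imports Complex_Main
begin

definition is_3graph :: "nat \<Rightarrow> nat set set \<Rightarrow> bool" where
  "is_3graph n E \<longleftrightarrow> (\<forall>e\<in>E. e \<subseteq> {..<n} \<and> card e = 3)"

text \<open>The standard simplex Delta in R^n; vectors are functions nat => real, only the
coordinates i < n are relevant.\<close>
definition simplex :: "nat \<Rightarrow> (nat \<Rightarrow> real) set" where
  "simplex n = {x. (\<forall>i<n. 0 \<le> x i \<and> x i \<le> 1) \<and> (\<Sum>i<n. x i) = 1}"

definition lag_poly :: "nat set set \<Rightarrow> (nat \<Rightarrow> real) \<Rightarrow> real" where
  "lag_poly E x = (\<Sum>e\<in>E. \<Prod>i\<in>e. x i)"

text \<open>Lagrangian: maximum of lag_poly over the simplex (the maximum exists by compactness,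
so it equals the supremum).\<close>
definition lagrangian :: "nat \<Rightarrow> nat set set \<Rightarrow> real" where
  "lagrangian n E = Sup (lag_poly E ` simplex n)"

definition contains_copy :: "nat \<Rightarrow> nat set set \<Rightarrow> nat \<Rightarrow> nat set set \<Rightarrow> bool" where
  "contains_copy n E t F \<longleftrightarrow>
     (\<exists>f. inj_on f {..<t} \<and> f ` {..<t} \<subseteq> {..<n} \<and> (\<forall>e\<in>F. f ` e \<in> E))"

text \<open>Lagrangian density: supremum of 3! * lambda(G) over all F-free 3-graphs G
(on a nonempty vertex set, so that the simplex is nonempty).\<close>
definition lagrangian_density :: "nat \<Rightarrow> nat set set \<Rightarrow> real" where
  "lagrangian_density t F =
     Sup {6 * lagrangian n E | n E. 1 \<le> n \<and> is_3graph n E \<and> \<not> contains_copy n E t F}"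

definition complete3 :: "nat \<Rightarrow> nat set set" where
  "complete3 m = {e. e \<subseteq> {..<m} \<and> card e = 3}"

definition lambda_perfect :: "nat \<Rightarrow> nat set set \<Rightarrow> bool" where
  "lambda_perfect t H \<longleftrightarrow> lagrangian_density t H = 6 * lagrangian (t - 1) (complete3 (t - 1))"

end

theory Submission
  imports Defs
begin

definition complete2 :: "nat \<Rightarrow> nat set set" where
  "complete2 m = {e. e \<subseteq> {..<m} \<and> card e = 2}"

lemma card_complete2: "card (complete2 m) = m choose 2"
  unfolding complete2_def using n_subsets[of "{..<m}" 2] by simp

lemma card_complete3: "card (complete3 m) = m choose 3"
  unfolding complete3_def using n_subsets[of "{..<m}" 3] by simp

lemma finite_complete2: "finite (complete2 m)"
  unfolding complete2_def by (rule finite_subset[of _ "Pow {..<m}"]) auto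

lemma finite_complete3: "finite (complete3 m)"
  unfolding complete3_def by (rule finite_subset[of _ "Pow {..<m}"]) auto

lemma choose2_real: "2 * real (m choose 2) = real m * (real m - 1)"
proof (induction m)
  case 0 then show ?case by simp
next
  case (Suc m)
  have "Suc m choose 2 = (m choose 1) + (m choose 2)"
    by (simp add: numeral_2_eq_2)
  then show ?case using Suc by (simp add: algebra_simps)
qed

lemma choose3_real: "6 * real (m choose 3) = real m * (real m - 1) * (real m - 2)"
proof (induction m)
  case 0 then show ?case by simp
next
  case (Suc m)
  have "Suc m choose 3 = (m choose 2) + (m choose 3)"
    by (simp add: numeral_3_eq_3 numeral_2_eq_2)
  then show ?case using Suc choose2_real[of m] by (simp add: algebra_simps)
qed

lemma complete2_Suc:
  "complete2 (Suc m) = complete2 m \<union> (\<lambda>j. {j, m}) ` {..<m}"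
proof
  show "complete2 (Suc m) \<subseteq> complete2 m \<union> (\<lambda>j. {j, m}) ` {..<m}"
  proof
    fix e assume e: "e \<in> complete2 (Suc m)"
    show "e \<in> complete2 m \<union> (\<lambda>j. {j, m}) ` {..<m}"
    proof (cases "m \<in> e")
      case False
      then have "e \<subseteq> {..<m}" using e unfolding complete2_def by (auto simp: less_Suc_eq)
      then show ?thesis using e unfolding complete2_def by auto
    next
      case True
      have fe: "finite e" using e unfolding complete2_def by (auto intro: finite_subset)
      have "card (e - {m}) = 1" using e True fe unfolding complete2_def by simp
      then obtain j where j: "e - {m} = {j}" by (auto simp: card_Suc_eq)
      then have "j \<in> e" "j \<noteq> m" by auto
      then have "j < m" using e unfolding complete2_def by (auto simp: less_Suc_eq)
      moreover have "e = {j, m}" using j True by auto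
      ultimately show ?thesis by auto
    qed
  qed
next
  show "complete2 m \<union> (\<lambda>j. {j, m}) ` {..<m} \<subseteq> complete2 (Suc m)"
    unfolding complete2_def by auto
qed

lemma complete3_Suc:
  "complete3 (Suc m) = complete3 m \<union> insert m ` complete2 m"
proof
  show "complete3 (Suc m) \<subseteq> complete3 m \<union> insert m ` complete2 m"
  proof
    fix e assume e: "e \<in> complete3 (Suc m)"
    show "e \<in> complete3 m \<union> insert m ` complete2 m"
    proof (cases "m \<in> e")
      case False
      then have "e \<subseteq> {..<m}" using e unfolding complete3_def by (auto simp: less_Suc_eq)
      then show ?thesis using e unfolding complete3_def by auto
    next
      case True
      have fe: "finite e" using e unfolding complete3_def by (auto intro: finite_subset)
      have "card (e - {m}) = 2" using e True fe unfolding complete3_def by simp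
      moreover have "e - {m} \<subseteq> {..<m}" using e unfolding complete3_def by (auto simp: less_Suc_eq)
      ultimately have "e - {m} \<in> complete2 m" unfolding complete2_def by auto
      moreover have "e = insert m (e - {m})" using True by auto
      ultimately show ?thesis by blast
    qed
  qed
next
  show "complete3 m \<union> insert m ` complete2 m \<subseteq> complete3 (Suc m)"
  proof
    fix e assume "e \<in> complete3 m \<union> insert m ` complete2 m"
    then show "e \<in> complete3 (Suc m)"
    proof
      assume "e \<in> complete3 m" then show ?thesis unfolding complete3_def by auto
    next
      assume "e \<in> insert m ` complete2 m"
      then obtain p where p: "p \<in> complete2 m" "e = insert m p" by auto
      have "m \<notin> p" "finite p" using p(1) unfolding complete2_def by (auto intro: finite_subset)
      then show ?thesis using p unfolding complete3_def complete2_def by auto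
    qed
  qed
qed

definition es2 :: "(nat \<Rightarrow> real) \<Rightarrow> nat \<Rightarrow> real" where
  "es2 x m = (\<Sum>e\<in>complete2 m. \<Prod>i\<in>e. x i)"

lemma es2_Suc: "es2 x (Suc m) = es2 x m + x m * (\<Sum>i<m. x i)"
proof -
  have disj: "complete2 m \<inter> (\<lambda>j. {j, m}) ` {..<m} = {}"
    unfolding complete2_def by auto
  have inj: "inj_on (\<lambda>j. {j, m}) {..<m}"
    by (auto simp: inj_on_def doubleton_eq_iff)
  have "es2 x (Suc m) = es2 x m + (\<Sum>e\<in>(\<lambda>j. {j, m}) ` {..<m}. \<Prod>i\<in>e. x i)"
    unfolding es2_def complete2_Suc
    by (rule sum.union_disjoint) (auto simp: finite_complete2 disj)
  also have "(\<Sum>e\<in>(\<lambda>j. {j, m}) ` {..<m}. \<Prod>i\<in>e. x i) = (\<Sum>j<m. x j * x m)"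
    by (subst sum.reindex[OF inj]) (auto intro!: sum.cong)
  finally show ?thesis by (simp add: sum_distrib_left mult.commute)
qed

lemma es3_Suc: "lag_poly (complete3 (Suc m)) x = lag_poly (complete3 m) x + x m * es2 x m"
proof -
  have disj: "complete3 m \<inter> insert m ` complete2 m = {}"
    unfolding complete3_def by auto
  have inj: "inj_on (insert m) (complete2 m)"
    unfolding inj_on_def complete2_def
    by (metis Diff_insert_absorb lessThan_iff less_irrefl subsetD mem_Collect_eq)
  have "lag_poly (complete3 (Suc m)) x = lag_poly (complete3 m) x + (\<Sum>e\<in>insert m ` complete2 m. \<Prod>i\<in>e. x i)"
    unfolding lag_poly_def complete3_Suc
    by (rule sum.union_disjoint) (auto simp: finite_complete2 finite_complete3 disj)
  also have "(\<Sum>e\<in>insert m ` complete2 m. \<Prod>i\<in>e. x i) = (\<Sum>p\<in>complete2 m. x m * (\<Prod>i\<in>p. x i))"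
  proof (subst sum.reindex[OF inj], rule sum.cong)
    fix p assume "p \<in> complete2 m"
    then have "m \<notin> p" "finite p" unfolding complete2_def by (auto intro: finite_subset)
    then show "((\<lambda>e. \<Prod>i\<in>e. x i) \<circ> insert m) p = x m * (\<Prod>i\<in>p. x i)" by simp
  qed simp
  finally show ?thesis by (simp add: es2_def sum_distrib_left)
qed

lemma es2_formula: "2 * es2 x m = (\<Sum>i<m. x i)^2 - (\<Sum>i<m. x i ^ 2)"
proof (induction m)
  case 0 then show ?case by (simp add: es2_def complete2_def)
next
  case (Suc m) then show ?case by (simp add: es2_Suc power2_eq_square algebra_simps)
qed

lemma es3_formula: "6 * lag_poly (complete3 m) x =
   (\<Sum>i<m. x i)^3 - 3 * (\<Sum>i<m. x i) * (\<Sum>i<m. x i ^ 2) + 2 * (\<Sum>i<m. x i ^ 3)"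
proof (induction m)
  case 0 then show ?case by (simp add: lag_poly_def complete3_def)
next
  case (Suc m)
  have "6 * lag_poly (complete3 (Suc m)) x = 6 * lag_poly (complete3 m) x + 3 * x m * (2 * es2 x m)"
    by (simp add: es3_Suc algebra_simps)
  also have "\<dots> = (\<Sum>i<Suc m. x i)^3 - 3 * (\<Sum>i<Suc m. x i) * (\<Sum>i<Suc m. x i ^ 2) + 2 * (\<Sum>i<Suc m. x i ^ 3)"
    unfolding Suc es2_formula by (simp add: power2_eq_square power3_eq_cube algebra_simps)
  finally show ?case .
qed

lemma tangent_ineq:
  fixes y c :: real
  assumes "0 \<le> y" "y \<le> 1" "0 < c" "c \<le> 1/4"
  shows "2*y^3 - 3*y^2 \<le> 2*c^3 - 3*c^2 + (6*c^2 - 6*c) * (y - c)"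
proof -
  have "2*c^3 - 3*c^2 + (6*c^2 - 6*c) * (y - c) - (2*y^3 - 3*y^2) = (y-c)^2 * (3 - 4*c - 2*y)"
    by (simp add: power2_eq_square power3_eq_cube algebra_simps)
  moreover have "(y-c)^2 * (3 - 4*c - 2*y) \<ge> 0" using assms by auto
  ultimately show ?thesis by linarith
qed

lemma amgm3:
  fixes a b c :: real
  assumes "0 \<le> a" "0 \<le> b" "0 \<le> c"
  shows "27*a*b*c \<le> (a+b+c)^3"
proof -
  have "2*((a+b+c)^3 - 27*a*b*c) = (a+b+c) * ((a-b)^2 + (b-c)^2 + (c-a)^2)
     + 6*(a*(b-c)^2 + b*(c-a)^2 + c*(a-b)^2)"
    by (simp add: power2_eq_square power3_eq_cube algebra_simps)
  moreover have "(a+b+c) * ((a-b)^2 + (b-c)^2 + (c-a)^2) \<ge> 0" using assms by auto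
  moreover have "a*(b-c)^2 + b*(c-a)^2 + c*(a-b)^2 \<ge> 0" using assms by auto
  ultimately show ?thesis by (simp add: algebra_simps)
qed

lemma K_bound:
  assumes n: "n \<ge> 3" and x: "x \<in> simplex n"
  shows "6 * lag_poly (complete3 n) x \<le> real n * (real n - 1) * (real n - 2) / real n ^ 3"
proof -
  have x01: "\<And>i. i < n \<Longrightarrow> 0 \<le> x i \<and> x i \<le> 1" and s1: "(\<Sum>i<n. x i) = 1"
    using x unfolding simplex_def by auto
  have E: "6 * lag_poly (complete3 n) x = 1 - 3 * (\<Sum>i<n. x i ^ 2) + 2 * (\<Sum>i<n. x i ^ 3)"
    using es3_formula[of n x] s1 by simp
  show ?thesis
  proof (cases "n = 3")
    case True
    have "6 * lag_poly (complete3 n) x = 6 * (x 0 * x 1 * x 2)"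
      using es3_formula[of n x] True
      by (simp add: numeral_3_eq_3 numeral_2_eq_2 power2_eq_square power3_eq_cube algebra_simps)
    moreover have "27 * x 0 * x 1 * x 2 \<le> 1"
      using amgm3[of "x 0" "x 1" "x 2"] x01[of 0] x01[of 1] x01[of 2] s1 True
      by (simp add: numeral_3_eq_3 numeral_2_eq_2)
    ultimately show ?thesis using True by simp
  next
    case False
    with n have n4: "n \<ge> 4" by simp
    define c :: real where "c = 1 / real n"
    have c: "0 < c" "c \<le> 1/4" using n4 unfolding c_def by (auto simp: field_simps)
    have "(\<Sum>i<n. 2 * x i ^ 3 - 3 * x i ^ 2) \<le> (\<Sum>i<n. 2*c^3 - 3*c^2 + (6*c^2 - 6*c) * (x i - c))"
      by (rule sum_mono) (use x01 c tangent_ineq in auto)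
    also have "\<dots> = real n * (2*c^3 - 3*c^2) + (6*c^2 - 6*c) * ((\<Sum>i<n. x i) - real n * c)"
    proof -
      have "(\<Sum>i<n. (6*c^2 - 6*c) * (x i - c)) = (6*c^2 - 6*c) * (\<Sum>i<n. (x i - c))"
        by (simp add: sum_distrib_left)
      also have "(\<Sum>i<n. (x i - c)) = (\<Sum>i<n. x i) - real n * c"
        by (simp add: sum_subtractf)
      finally show ?thesis by (simp add: sum.distrib)
    qed
    also have "\<dots> = real n * (2*c^3 - 3*c^2)"
      using s1 n4 unfolding c_def by simp
    finally have "2 * (\<Sum>i<n. x i ^ 3) - 3 * (\<Sum>i<n. x i ^ 2) \<le> real n * (2*c^3 - 3*c^2)"
      by (simp add: sum_subtractf sum_distrib_left)
    then have "6 * lag_poly (complete3 n) x \<le> 1 + real n * (2*c^3 - 3*c^2)" using E by linarith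
    also have "\<dots> = real n * (real n - 1) * (real n - 2) / real n ^ 3"
      using n4 unfolding c_def by (simp add: field_simps power3_eq_cube power2_eq_square)
    finally show ?thesis .
  qed
qed

lemma lag_bdd:
  assumes E: "is_3graph n E" and x: "x \<in> simplex n"
  shows "lag_poly E x \<le> exp 1"
proof -
  have x01: "\<And>i. i < n \<Longrightarrow> 0 \<le> x i \<and> x i \<le> 1" and s1: "(\<Sum>i<n. x i) = 1"
    using x unfolding simplex_def by auto
  have sub: "E \<subseteq> Pow {..<n}" using E unfolding is_3graph_def by auto
  have "lag_poly E x \<le> (\<Sum>e\<in>Pow {..<n}. \<Prod>i\<in>e. x i)"
    unfolding lag_poly_def
  proof (rule sum_mono2[OF _ sub])
    fix e assume "e \<in> Pow {..<n} - E"
    then show "0 \<le> (\<Prod>i\<in>e. x i)" using x01 by (auto intro!: prod_nonneg)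
  qed simp
  also have "\<dots> = (\<Prod>i<n. x i + 1)"
    using prod_add[of "{..<n}" x "\<lambda>_. 1"] by simp
  also have "\<dots> \<le> (\<Prod>i<n. exp (x i))"
    by (rule prod_mono) (use x01 exp_ge_add_one_self in \<open>auto simp: add.commute\<close>)
  also have "\<dots> = exp 1" using s1 by (simp add: exp_sum[symmetric])
  finally show ?thesis .
qed

lemma uniform_simplex: "n \<ge> 1 \<Longrightarrow> (\<lambda>i. 1 / real n) \<in> simplex n"
  unfolding simplex_def by auto

lemma lagrangian_le:
  assumes "n \<ge> 1" "\<And>x. x \<in> simplex n \<Longrightarrow> lag_poly E x \<le> B"
  shows "lagrangian n E \<le> B"
  unfolding lagrangian_def
  by (rule cSup_least) (use assms uniform_simplex in auto)

lemma lagrangian_ge: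
  assumes E: "is_3graph n E" and x: "x \<in> simplex n"
  shows "lag_poly E x \<le> lagrangian n E"
  unfolding lagrangian_def
  by (rule cSup_upper) (use x lag_bdd[OF E] in \<open>auto simp: bdd_above_def\<close>)

lemma const_complete3:
  assumes "\<And>i. i < m \<Longrightarrow> x i = c"
  shows "lag_poly (complete3 m) x = real (m choose 3) * c^3"
proof -
  have "lag_poly (complete3 m) x = (\<Sum>e\<in>complete3 m. c^3)"
    unfolding lag_poly_def
  proof (rule sum.cong)
    fix e assume e: "e \<in> complete3 m"
    then have "(\<Prod>i\<in>e. x i) = (\<Prod>i\<in>e. c)" using assms unfolding complete3_def
      by (intro prod.cong) auto
    then show "(\<Prod>i\<in>e. x i) = c^3" using e unfolding complete3_def by simp
  qed simp
  then show ?thesis by (simp add: card_complete3)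
qed

lemma const_complete2:
  assumes "\<And>i. i < m \<Longrightarrow> x i = c"
  shows "es2 x m = real (m choose 2) * c^2"
proof -
  have "es2 x m = (\<Sum>e\<in>complete2 m. c^2)"
    unfolding es2_def
  proof (rule sum.cong)
    fix e assume e: "e \<in> complete2 m"
    then have "(\<Prod>i\<in>e. x i) = (\<Prod>i\<in>e. c)" using assms unfolding complete2_def
      by (intro prod.cong) auto
    then show "(\<Prod>i\<in>e. x i) = c^2" using e unfolding complete2_def by simp
  qed simp
  then show ?thesis by (simp add: card_complete2)
qed

lemma insert_sum:
  assumes "k \<ge> m"
  shows "(\<Sum>e\<in>insert k ` complete2 m. \<Prod>i\<in>e. x i) = x k * es2 x m"
proof -
  have inj: "inj_on (insert k) (complete2 m)"
    unfolding inj_on_def complete2_def using assms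
    by (metis Diff_insert_absorb lessThan_iff not_less subsetD mem_Collect_eq)
  have "(\<Sum>e\<in>insert k ` complete2 m. \<Prod>i\<in>e. x i) = (\<Sum>p\<in>complete2 m. x k * (\<Prod>i\<in>p. x i))"
  proof (subst sum.reindex[OF inj], rule sum.cong)
    fix p assume "p \<in> complete2 m"
    then have "k \<notin> p" "finite p" using assms unfolding complete2_def by (auto intro: finite_subset)
    then show "((\<lambda>e. \<Prod>i\<in>e. x i) \<circ> insert k) p = x k * (\<Prod>i\<in>p. x i)" by simp
  qed simp
  then show ?thesis by (simp add: es2_def sum_distrib_left)
qed

lemma arith_helper:
  fixes a b r :: real
  assumes "r > 0"
  shows "6 * (a * (1/r)^3 + 1/(2*r) * (b * (1/r)^2) + 1/(2*r) * (b * (1/r)^2)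
     + 1/(2*r) * (1/r) * (1/(2*r))) = 6 * (a + b) / r^3 + 6 / (4 * r^3)"
  using assms by (simp add: field_simps power2_eq_square power3_eq_cube)

theorem mainTheorem7:
  fixes t :: nat and H :: "nat set set"
  assumes "t \<ge> 4"
    and "is_3graph t H"
    and "card H \<ge> (t - 1 choose 3) + (t - 2 choose 2) + 2"
  shows "\<not> lambda_perfect t H"
proof -
  define m where "m = t - 2"
  have tm: "t = Suc (Suc m)" and m2: "m \<ge> 2" using assms(1) unfolding m_def by auto
  define n where "n = Suc m"
  have tn: "t - 1 = n" "t - 2 = m" "t = Suc n" using tm n_def by auto
  have n3: "n \<ge> 3" using m2 n_def by simp
  define C where "C = insert n ` complete2 m"
  define D where "D = {{n, 0, m}}"
  define G where "G = complete3 n \<union> (C \<union> D)"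
  define y :: "nat \<Rightarrow> real" where
    "y = (\<lambda>i. if i < m then 1 / real n else if i = m \<or> i = n then 1 / (2 * real n) else 0)"
  have fin3: "finite (complete3 n)" by (rule finite_complete3)
  have finC: "finite C" unfolding C_def using finite_complete2 by simp
  have finD: "finite D" unfolding D_def by simp
  have finG: "finite G" unfolding G_def using fin3 finC finD by simp
  have G3: "is_3graph t G"
    unfolding is_3graph_def
  proof
    fix e assume "e \<in> G"
    then consider "e \<in> complete3 n" | "e \<in> C" | "e \<in> D" unfolding G_def by auto
    then show "e \<subseteq> {..<t} \<and> card e = 3"
    proof cases
      case 1 then show ?thesis unfolding complete3_def tn by auto
    next
      case 2
      then obtain p where p: "p \<in> complete2 m" "e = insert n p" unfolding C_def by auto
      have "n \<notin> p" "finite p" using p(1) unfolding complete2_def n_def by (auto intro: finite_subset)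
      then show ?thesis using p unfolding complete2_def tn n_def by auto
    next
      case 3 then show ?thesis unfolding D_def tn n_def using m2 by auto
    qed
  qed
  have "card G \<le> card (complete3 n) + (card C + card D)"
    unfolding G_def by (meson card_Un_le add_le_mono le_refl order_trans)
  also have "card C \<le> card (complete2 m)" unfolding C_def by (rule card_image_le[OF finite_complete2])
  finally have cardG: "card G \<le> (n choose 3) + (m choose 2) + 1"
    by (simp add: card_complete3 card_complete2 D_def)
  have free: "\<not> contains_copy t G t H"
  proof
    assume "contains_copy t G t H"
    then obtain f where f: "inj_on f {..<t}" "\<forall>e\<in>H. f ` e \<in> G"
      unfolding contains_copy_def by auto
    have Hsub: "\<And>e. e \<in> H \<Longrightarrow> e \<subseteq> {..<t}" using assms(2) unfolding is_3graph_def by auto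
    have inj: "inj_on ((`) f) H"
      unfolding inj_on_def using inj_on_image_eq_iff[OF f(1)] Hsub by blast
    have "card H = card ((`) f ` H)" using card_image[OF inj] by simp
    also have "\<dots> \<le> card G" using f(2) finG by (intro card_mono) auto
    finally show False using cardG assms(3) tn by simp
  qed
  have ysim: "y \<in> simplex t"
  proof -
    have h1: "(\<Sum>i<m. y i) = real m / real n" by (simp add: y_def)
    have h2: "y m = 1 / (2 * real n)" "y n = 1 / (2 * real n)" by (simp_all add: y_def n_def)
    have "(\<Sum>i<t. y i) = (\<Sum>i<m. y i) + y m + y n"
      using tn n_def by simp
    also have "\<dots> = (real m + 1) / real n" unfolding h1 h2 using n3 by (simp add: field_simps)
    also have "\<dots> = 1" unfolding n_def by simp
    finally have "(\<Sum>i<t. y i) = 1" .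
    moreover have "\<forall>i<t. 0 \<le> y i \<and> y i \<le> 1" unfolding y_def n_def by auto
    ultimately show ?thesis unfolding simplex_def by auto
  qed
  have yconst: "\<And>i. i < m \<Longrightarrow> y i = 1 / real n" unfolding y_def by simp
  have es2y: "es2 y m = real (m choose 2) * (1 / real n)^2" using const_complete2[OF yconst] .
  have lagK: "lag_poly (complete3 n) y = real (m choose 3) * (1 / real n)^3
      + 1 / (2 * real n) * (real (m choose 2) * (1 / real n)^2)"
    unfolding n_def using es3_Suc[of m y] const_complete3[OF yconst] es2y
    by (simp add: y_def n_def)
  have lagC: "(\<Sum>e\<in>C. \<Prod>i\<in>e. y i) = 1 / (2 * real n) * (real (m choose 2) * (1 / real n)^2)"
    unfolding C_def using insert_sum[of m n y] es2y by (simp add: y_def n_def)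
  have lagD: "(\<Sum>e\<in>D. \<Prod>i\<in>e. y i) = 1 / (2 * real n) * (1 / real n) * (1 / (2 * real n))"
    unfolding D_def using m2 by (simp add: y_def n_def)
  have disj1: "complete3 n \<inter> (C \<union> D) = {}"
    unfolding complete3_def C_def D_def by auto
  have disj2: "C \<inter> D = {}"
  proof -
    have False if "{n, 0, m} = insert n p" "p \<subseteq> {..<m}" for p
    proof -
      have "m \<in> insert n p" using that(1) by blast
      then have "m \<in> p" using n_def by auto
      then show False using that(2) by auto
    qed
    then show ?thesis unfolding C_def D_def complete2_def by auto
  qed
  have lagG: "lag_poly G y = lag_poly (complete3 n) y + (\<Sum>e\<in>C. \<Prod>i\<in>e. y i) + (\<Sum>e\<in>D. \<Prod>i\<in>e. y i)"
    unfolding lag_poly_def G_def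
    using sum.union_disjoint[OF fin3 _ disj1, of "\<lambda>e. \<Prod>i\<in>e. y i"]
      sum.union_disjoint[OF finC finD disj2, of "\<lambda>e. \<Prod>i\<in>e. y i"] finC finD
    by simp
  have ch: "real (n choose 3) = real (m choose 3) + real (m choose 2)"
    unfolding n_def by (simp add: numeral_3_eq_3 numeral_2_eq_2)
  have np: "real n > 0" using n3 by simp
  have "6 * lag_poly G y = 6 * real (n choose 3) / real n ^ 3 + 6 / (4 * real n ^ 3)"
    unfolding lagG lagK lagC lagD ch using arith_helper[OF np] by simp
  also have "6 * real (n choose 3) = real n * (real n - 1) * (real n - 2)"
    by (rule choose3_real)
  finally have big: "6 * lag_poly G y > real n * (real n - 1) * (real n - 2) / real n ^ 3"
    using np by simp
  have Kle: "6 * lagrangian n (complete3 n) \<le> real n * (real n - 1) * (real n - 2) / real n ^ 3"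
  proof -
    have "lagrangian n (complete3 n) \<le> real n * (real n - 1) * (real n - 2) / real n ^ 3 / 6"
    proof (rule lagrangian_le)
      fix x assume xs: "x \<in> simplex n"
      have h6: "\<And>p q :: real. 6 * p \<le> q \<Longrightarrow> p \<le> q / 6" by simp
      from h6[OF K_bound[OF n3 xs]]
      show "lag_poly (complete3 n) x \<le> real n * (real n - 1) * (real n - 2) / real n ^ 3 / 6" .
    qed (use n3 in auto)
    moreover have h7: "\<And>p q :: real. p \<le> q / 6 \<Longrightarrow> 6 * p \<le> q" by simp
    ultimately show ?thesis by blast
  qed
  define S where "S = {6 * lagrangian n E | n E. 1 \<le> n \<and> is_3graph n E \<and> \<not> contains_copy n E t H}"
  have bddS: "bdd_above S"
    unfolding bdd_above_def S_def
  proof (intro exI[of _ "6 * exp 1"] ballI)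
    fix z assume "z \<in> {6 * lagrangian n E | n E. 1 \<le> n \<and> is_3graph n E \<and> \<not> contains_copy n E t H}"
    then obtain k E where "z = 6 * lagrangian k E" "1 \<le> k" "is_3graph k E" by auto
    moreover have "lagrangian k E \<le> exp 1"
      by (rule lagrangian_le) (use calculation lag_bdd in auto)
    ultimately show "z \<le> 6 * exp 1" by simp
  qed
  have "6 * lagrangian t G \<in> S" unfolding S_def using G3 free tn by auto
  then have dens: "6 * lagrangian t G \<le> lagrangian_density t H"
    unfolding lagrangian_density_def S_def[symmetric] by (rule cSup_upper[OF _ bddS])
  have "6 * lag_poly G y \<le> 6 * lagrangian t G" using lagrangian_ge[OF G3 ysim] by simp
  then have "6 * lagrangian n (complete3 n) < lagrangian_density t H"
    using Kle big dens by linarith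
  then have "6 * lagrangian (t - 1) (complete3 (t - 1)) < lagrangian_density t H"
    using tn by simp
  then show ?thesis unfolding lambda_perfect_def by simp
qed

end
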